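(* Let $A$ be an AUF algebra and let $M,N$ be coherent left $A$-modules. Then $\dim\mathrm{Hom}_{A,-}(M,N)<\infty$.
   Context: All algebras are associative $\mathbb C$-algebras, not necessarily unital. An idempotent is $e$ with $e^2=e$. An algebra $A$ is AUF if there is a family $(e_i)_{i\in\mathfrak I}$ of mutually orthogonal idempotents with $\dim e_iAe_j<\infty$ and $A=\sum_{i,j}e_iAe_j$. A left $A$-module $M$ is quasicoherent if $\xi\in A\xi$ for all $\xi\in M$, and coherent if moreover finitely generated. $\mathrm{Hom}_{A,-}(M,N)$ denotes the space of left $A$-module homomorphisms. *)

theory Defs
  imports Complex_Main "HOL-Library.Function_Algebras"
begin

definition calg :: "(complex \<Rightarrow> 'a::ring \<Rightarrow> 'a) \<Rightarrow> bool" where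
  "calg sA \<longleftrightarrow> vector_space sA \<and>
     (\<forall>c x y. sA c (x * y) = sA c x * y \<and> sA c (x * y) = x * sA c y)"

definition fin_dim :: "(complex \<Rightarrow> 'v::ab_group_add \<Rightarrow> 'v) \<Rightarrow> 'v set \<Rightarrow> bool" where
  "fin_dim s S \<longleftrightarrow> (\<exists>B. finite B \<and> B \<subseteq> S \<and> S \<subseteq> module.span s B)"

definition idempotent :: "'a::ring \<Rightarrow> bool" where
  "idempotent x \<longleftrightarrow> x * x = x"

definition corner :: "'a::ring \<Rightarrow> 'a \<Rightarrow> 'a set" where
  "corner e f = {e * a * f | a. True}"

definition AUF_family :: "(complex \<Rightarrow> 'a::ring \<Rightarrow> 'a) \<Rightarrow> 'i set \<Rightarrow> ('i \<Rightarrow> 'a) \<Rightarrow> bool" where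
  "AUF_family sA I e \<longleftrightarrow>
     (\<forall>i\<in>I. idempotent (e i)) \<and>
     (\<forall>i\<in>I. \<forall>j\<in>I. i \<noteq> j \<longrightarrow> e i * e j = 0) \<and>
     (\<forall>i\<in>I. \<forall>j\<in>I. fin_dim sA (corner (e i) (e j))) \<and>
     (\<forall>a. \<exists>F x. finite F \<and> F \<subseteq> I \<times> I \<and>
            (\<forall>(i,j)\<in>F. x (i,j) \<in> corner (e i) (e j)) \<and> a = (\<Sum>p\<in>F. x p))"

definition lmod :: "(complex \<Rightarrow> 'a::ring \<Rightarrow> 'a) \<Rightarrow> (complex \<Rightarrow> 'm::ab_group_add \<Rightarrow> 'm)
                    \<Rightarrow> ('a \<Rightarrow> 'm \<Rightarrow> 'm) \<Rightarrow> bool" where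
  "lmod sA sM act \<longleftrightarrow> vector_space sM \<and>
     (\<forall>a b m. act (a * b) m = act a (act b m)) \<and>
     (\<forall>a b m. act (a + b) m = act a m + act b m) \<and>
     (\<forall>a m n. act a (m + n) = act a m + act a n) \<and>
     (\<forall>c a m. act (sA c a) m = sM c (act a m) \<and> act a (sM c m) = sM c (act a m))"

definition quasicoherent :: "('a \<Rightarrow> 'm \<Rightarrow> 'm) \<Rightarrow> bool" where
  "quasicoherent act \<longleftrightarrow> (\<forall>\<xi>. \<exists>a. act a \<xi> = \<xi>)"

definition fin_gen :: "(complex \<Rightarrow> 'm::ab_group_add \<Rightarrow> 'm) \<Rightarrow> ('a \<Rightarrow> 'm \<Rightarrow> 'm) \<Rightarrow> bool" where
  "fin_gen sM act \<longleftrightarrow> (\<exists>G. finite G \<and>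
     (\<forall>\<xi>. \<exists>a c. \<xi> = (\<Sum>g\<in>G. act (a g) g + sM (c g) g)))"

definition coherent :: "(complex \<Rightarrow> 'm::ab_group_add \<Rightarrow> 'm) \<Rightarrow> ('a \<Rightarrow> 'm \<Rightarrow> 'm) \<Rightarrow> bool" where
  "coherent sM act \<longleftrightarrow> quasicoherent act \<and> fin_gen sM act"

definition Hom_A :: "(complex \<Rightarrow> 'm::ab_group_add \<Rightarrow> 'm) \<Rightarrow> ('a \<Rightarrow> 'm \<Rightarrow> 'm)
                   \<Rightarrow> (complex \<Rightarrow> 'n::ab_group_add \<Rightarrow> 'n) \<Rightarrow> ('a \<Rightarrow> 'n \<Rightarrow> 'n)
                   \<Rightarrow> ('m \<Rightarrow> 'n) set" where
  "Hom_A sM actM sN actN =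
     {f. Vector_Spaces.linear sM sN f \<and> (\<forall>a \<xi>. f (actM a \<xi>) = actN a (f \<xi>))}"

definition fun_scale :: "(complex \<Rightarrow> 'n \<Rightarrow> 'n) \<Rightarrow> complex \<Rightarrow> ('m \<Rightarrow> 'n) \<Rightarrow> ('m \<Rightarrow> 'n)" where
  "fun_scale sN c f = (\<lambda>x. sN c (f x))"

end

theory Submission
  imports Defs
begin

lemma sum_fun_apply: "(sum f S) x = (\<Sum>s\<in>S. f s x)"
  for f :: "'b \<Rightarrow> 'c \<Rightarrow> 'd::comm_monoid_add"
  by (induction S rule: infinite_finite_induct) auto

lemma vs_fun: "vector_space sN \<Longrightarrow> vector_space (fun_scale sN)"
  unfolding vector_space_def fun_scale_def by (auto simp: fun_eq_iff)

lemma lmod_act0: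
  assumes "lmod sA sM act" shows "act 0 m = 0" "act a 0 = 0"
proof -
  have "act (0+0) m = act 0 m + act 0 m" using assms unfolding lmod_def by blast
  then show "act 0 m = 0" by simp
  have "act a (0+0) = act a 0 + act a 0" using assms unfolding lmod_def by blast
  then show "act a 0 = 0" by simp
qed

lemma lmod_act_sum:
  assumes "lmod sA sM act" shows "act (sum f S) m = (\<Sum>x\<in>S. act (f x) m)"
proof (induction S rule: infinite_finite_induct)
  case (insert x F) then show ?case using assms unfolding lmod_def by simp
qed (auto simp: lmod_act0[OF assms])

lemma lmod_act_sum2:
  assumes "lmod sA sM act" shows "act a (sum f S) = (\<Sum>x\<in>S. act a (f x))"
proof (induction S rule: infinite_finite_induct)
  case (insert x F) then show ?case using assms unfolding lmod_def by simp
qed (auto simp: lmod_act0[OF assms])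

lemma local_unit:
  assumes "AUF_family sA I e" and "lmod sA sM act" and "quasicoherent act" and "finite G"
  shows "\<exists>L. finite L \<and> L \<subseteq> I \<and> (\<forall>g\<in>G. g = (\<Sum>i\<in>L. act (e i) g))"
proof -
  have "\<forall>g. \<exists>b F x. act b g = g \<and> finite F \<and> F \<subseteq> I \<times> I \<and>
            (\<forall>(i,j)\<in>F. x (i,j) \<in> corner (e i) (e j)) \<and> b = (\<Sum>p\<in>F. x p)"
  proof
    fix g
    obtain b where b: "act b g = g" using assms(3) unfolding quasicoherent_def by blast
    obtain F x where "finite F \<and> F \<subseteq> I \<times> I \<and>
            (\<forall>(i,j)\<in>F. x (i,j) \<in> corner (e i) (e j)) \<and> b = (\<Sum>p\<in>F. x p)"
      using assms(1) unfolding AUF_family_def by blast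
    then show "\<exists>b F x. act b g = g \<and> finite F \<and> F \<subseteq> I \<times> I \<and>
            (\<forall>(i,j)\<in>F. x (i,j) \<in> corner (e i) (e j)) \<and> b = (\<Sum>p\<in>F. x p)"
      using b by blast
  qed
  note h0 = this
  from choice[OF h0] obtain b where hb: "\<forall>g. \<exists>F x. act (b g) g = g \<and> finite F \<and> F \<subseteq> I \<times> I \<and>
            (\<forall>(i,j)\<in>F. x (i,j) \<in> corner (e i) (e j)) \<and> (b g) = (\<Sum>p\<in>F. x p)" by blast
  from choice[OF hb] obtain F where hF: "\<forall>g. \<exists>x. act (b g) g = g \<and> finite (F g) \<and> (F g) \<subseteq> I \<times> I \<and>
            (\<forall>(i,j)\<in>(F g). x (i,j) \<in> corner (e i) (e j)) \<and> (b g) = (\<Sum>p\<in>(F g). x p)" by blast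
  from choice[OF hF] obtain x where bF: "\<And>g. act (b g) g = g \<and> finite (F g) \<and> (F g) \<subseteq> I \<times> I \<and>
            (\<forall>(i,j)\<in>(F g). (x g) (i,j) \<in> corner (e i) (e j)) \<and> (b g) = (\<Sum>p\<in>(F g). (x g) p)" by blast
  have bact: "act (b g) g = g" and Ffin: "finite (F g)" and FI: "F g \<subseteq> I \<times> I"
    and xc: "\<forall>(i,j)\<in>F g. x g (i,j) \<in> corner (e i) (e j)" and bsum: "b g = (\<Sum>p\<in>F g. x g p)" for g
    using bF[of g] by auto
  define L where "L = (\<Union>g\<in>G. fst ` F g)"
  have L: "finite L" "L \<subseteq> I" using Ffin FI assms(4) unfolding L_def by (auto, blast)
  have idem: "\<forall>i\<in>I. e i * e i = e i" and orth: "\<forall>i\<in>I. \<forall>j\<in>I. i \<noteq> j \<longrightarrow> e i * e j = 0"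
    using assms(1) unfolding AUF_family_def idempotent_def by auto
  have key: "(\<Sum>k\<in>L. e k * b g) = b g" if g: "g \<in> G" for g
  proof -
    have "(\<Sum>k\<in>L. e k * b g) = (\<Sum>k\<in>L. \<Sum>p\<in>F g. e k * x g p)"
      unfolding bsum[of g] by (simp add: sum_distrib_left)
    also have "\<dots> = (\<Sum>p\<in>F g. \<Sum>k\<in>L. e k * x g p)" by (rule sum.swap)
    also have "\<dots> = (\<Sum>p\<in>F g. x g p)"
    proof (rule sum.cong[OF refl])
      fix p assume p: "p \<in> F g"
      obtain i j where pij: "p = (i,j)" by fastforce
      have iL: "i \<in> L" using p g pij unfolding L_def by force
      have ij: "i \<in> I" "j \<in> I" using FI[of g] p pij by auto
      obtain a where xa: "x g p = e i * a * e j" using xc[of g] p pij unfolding corner_def by blast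
      have "(\<Sum>k\<in>L. e k * x g p) = (\<Sum>k\<in>L. if k = i then x g p else 0)"
      proof (rule sum.cong[OF refl])
        fix k assume k: "k \<in> L"
        show "e k * x g p = (if k = i then x g p else 0)"
        proof (cases "k = i")
          case True then show ?thesis using idem ij xa by (simp add: mult.assoc[symmetric])
        next
          case False
          have "e k * x g p = (e k * e i) * a * e j" by (simp add: xa mult.assoc)
          then show ?thesis using False orth k L ij by auto
        qed
      qed
      also have "\<dots> = x g p" using iL L by simp
      finally show "(\<Sum>k\<in>L. e k * x g p) = x g p" .
    qed
    also have "\<dots> = b g" using bsum[of g] by simp
    finally show ?thesis .
  qed
  have "g = (\<Sum>i\<in>L. act (e i) g)" if g: "g \<in> G" for g
  proof -
    have "(\<Sum>i\<in>L. act (e i) g) = (\<Sum>i\<in>L. act (e i) (act (b g) g))" using bact[of g] by simp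
    also have "\<dots> = (\<Sum>i\<in>L. act (e i * b g) g)" using assms(2) unfolding lmod_def by simp
    also have "\<dots> = act (\<Sum>i\<in>L. e i * b g) g" by (rule lmod_act_sum[OF assms(2), symmetric])
    also have "\<dots> = g" using key[OF g] bact[of g] by simp
    finally show ?thesis by simp
  qed
  then show ?thesis using L by blast
qed


lemma corner_fin:
  assumes "calg sA" and "AUF_family sA I e" and "lmod sA sN actN" and "coherent sN actN" and "i \<in> I"
  shows "\<exists>C. finite C \<and> (\<forall>n. actN (e i) n \<in> module.span sN C)"
proof -
  have vsN: "vector_space sN" using assms(3) unfolding lmod_def by blast
  have vsA: "vector_space sA" using assms(1) unfolding calg_def by blast
  interpret VN: vector_space sN by (rule vsN)
  interpret VA: vector_space sA by (rule vsA)
  have lm: "\<forall>a b m. actN (a * b) m = actN a (actN b m)" "\<forall>a b m. actN (a + b) m = actN a m + actN b m"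
    "\<forall>a m n. actN a (m + n) = actN a m + actN a n"
    "\<forall>c a m. actN (sA c a) m = sN c (actN a m) \<and> actN a (sN c m) = sN c (actN a m)"
    using assms(3) unfolding lmod_def by blast+
  obtain H where H: "finite H" "\<forall>\<xi>. \<exists>a c. \<xi> = (\<Sum>h\<in>H. actN (a h) h + sN (c h) h)"
    using assms(4) unfolding coherent_def fin_gen_def by blast
  have qc: "quasicoherent actN" using assms(4) unfolding coherent_def by blast
  obtain L where L: "finite L" "L \<subseteq> I" "\<forall>h\<in>H. h = (\<Sum>l\<in>L. actN (e l) h)"
    using local_unit[OF assms(2) assms(3) qc H(1)] by blast
  have "\<forall>l\<in>L. \<exists>D. finite D \<and> corner (e i) (e l) \<subseteq> module.span sA D"
    using assms(2,5) L(2) unfolding AUF_family_def fin_dim_def by blast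
  then obtain D where D: "\<And>l. l \<in> L \<Longrightarrow> finite (D l) \<and> corner (e i) (e l) \<subseteq> module.span sA (D l)"
    by metis
  define C where "C = (\<Union>l\<in>L. \<Union>h\<in>H. (\<lambda>d. actN d h) ` D l) \<union> (\<lambda>h. actN (e i) h) ` H"
  have Cfin: "finite C" unfolding C_def using L(1) H(1) D by auto
  have hom: "module_hom sA sN (\<lambda>d. actN d h)" for h
    unfolding module_hom_iff module_iff_vector_space using vsA vsN lm by blast
  have inspan: "actN d h \<in> module.span sN C" if "l \<in> L" "h \<in> H" "d \<in> corner (e i) (e l)" for d h l
  proof -
    have "d \<in> module.span sA (D l)" using D that by blast
    then have "actN d h \<in> module.span sN ((\<lambda>d. actN d h) ` D l)"
      using module_hom.span_image[OF hom[of h]] by blast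
    moreover have "(\<lambda>d. actN d h) ` D l \<subseteq> C" unfolding C_def using that by blast
    ultimately show ?thesis using VN.span_mono by blast
  qed
  have "actN (e i) n \<in> module.span sN C" for n
  proof -
    obtain a c where n: "n = (\<Sum>h\<in>H. actN (a h) h + sN (c h) h)" using H(2) by blast
    have "actN (e i) n = (\<Sum>h\<in>H. actN (e i * a h) h + sN (c h) (actN (e i) h))"
      unfolding n lmod_act_sum2[OF assms(3)] using lm by simp
    also have "\<dots> \<in> module.span sN C"
    proof (rule VN.span_sum)
      fix h assume h: "h \<in> H"
      have "actN (e i * a h) h = actN (e i * a h) (\<Sum>l\<in>L. actN (e l) h)" using L(3) h by simp
      also have "\<dots> = (\<Sum>l\<in>L. actN (e i * a h * e l) h)"
        unfolding lmod_act_sum2[OF assms(3)] using lm by simp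
      also have "\<dots> \<in> module.span sN C"
      proof (rule VN.span_sum)
        fix l assume l: "l \<in> L"
        have "e i * a h * e l \<in> corner (e i) (e l)" unfolding corner_def by blast
        then show "actN (e i * a h * e l) h \<in> module.span sN C" using inspan[OF l h] by blast
      qed
      finally have 1: "actN (e i * a h) h \<in> module.span sN C" .
      have "actN (e i) h \<in> C" unfolding C_def using h by blast
      then have 2: "sN (c h) (actN (e i) h) \<in> module.span sN C"
        using VN.span_scale VN.span_base by blast
      show "actN (e i * a h) h + sN (c h) (actN (e i) h) \<in> module.span sN C"
        using VN.span_add[OF 1 2] .
    qed
    finally show ?thesis .
  qed
  then show ?thesis using Cfin by blast
qed


theorem proposition7p9:
  fixes sA :: "complex \<Rightarrow> 'a::ring \<Rightarrow> 'a"
    and I :: "'i set" and e :: "'i \<Rightarrow> 'a"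
    and sM :: "complex \<Rightarrow> 'm::ab_group_add \<Rightarrow> 'm" and actM :: "'a \<Rightarrow> 'm \<Rightarrow> 'm"
    and sN :: "complex \<Rightarrow> 'n::ab_group_add \<Rightarrow> 'n" and actN :: "'a \<Rightarrow> 'n \<Rightarrow> 'n"
  assumes "calg sA"
    and "AUF_family sA I e"
    and "lmod sA sM actM" and "coherent sM actM"
    and "lmod sA sN actN" and "coherent sN actN"
  shows "fin_dim (fun_scale sN) (Hom_A sM actM sN actN)"
proof -
  define Hom where "Hom = Hom_A sM actM sN actN"
  have vsN: "vector_space sN" using assms(5) unfolding lmod_def by blast
  have vsM: "vector_space sM" using assms(3) unfolding lmod_def by blast
  interpret VN: vector_space sN by (rule vsN)
  interpret VM: vector_space sM by (rule vsM)
  interpret VS: vector_space "fun_scale sN" by (rule vs_fun[OF vsN])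
  have lmN: "\<forall>a b m. actN (a + b) m = actN a m + actN b m"
    "\<forall>a m n. actN a (m + n) = actN a m + actN a n"
    "\<forall>c a m. actN (sA c a) m = sN c (actN a m) \<and> actN a (sN c m) = sN c (actN a m)"
    using assms(5) unfolding lmod_def by blast+
  have homf: "module_hom sM sN f" "\<And>a \<xi>. f (actM a \<xi>) = actN a (f \<xi>)" if "f \<in> Hom" for f
    using that unfolding Hom_def Hom_A_def by (auto simp: module_hom_iff_linear)
  obtain G where G: "finite G" "\<forall>\<xi>. \<exists>a c. \<xi> = (\<Sum>g\<in>G. actM (a g) g + sM (c g) g)"
    using assms(4) unfolding coherent_def fin_gen_def by blast
  have qcM: "quasicoherent actM" using assms(4) unfolding coherent_def by blast
  obtain L where L: "finite L" "L \<subseteq> I" "\<forall>g\<in>G. g = (\<Sum>i\<in>L. actM (e i) g)"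
    using local_unit[OF assms(2) assms(3) qcM G(1)] by blast
  have "\<forall>i\<in>L. \<exists>C. finite C \<and> (\<forall>n. actN (e i) n \<in> module.span sN C)"
    using corner_fin[OF assms(1) assms(2) assms(5) assms(6)] L(2) by blast
  then obtain C where C: "\<And>i. i \<in> L \<Longrightarrow> finite (C i) \<and> (\<forall>n. actN (e i) n \<in> module.span sN (C i))"
    by metis
  define C' where "C' = (\<Union>i\<in>L. C i)"
  have C'fin: "finite C'" unfolding C'_def using L(1) C by auto
  have K1: "f g \<in> module.span sN C'" if f: "f \<in> Hom" and g: "g \<in> G" for f g
  proof -
    have "f g = f (\<Sum>i\<in>L. actM (e i) g)" using L(3) g by metis
    also have "\<dots> = (\<Sum>i\<in>L. actN (e i) (f g))"
      unfolding module_hom.sum[OF homf(1)[OF f]] homf(2)[OF f] ..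
    also have "\<dots> \<in> module.span sN C'"
    proof (rule VN.span_sum)
      fix i assume i: "i \<in> L"
      have "actN (e i) (f g) \<in> module.span sN (C i)" using C[OF i] by blast
      moreover have "C i \<subseteq> C'" unfolding C'_def using i by blast
      ultimately show "actN (e i) (f g) \<in> module.span sN C'" using VN.span_mono by blast
    qed
    finally show ?thesis .
  qed
  have K2: "f \<xi> = 0" if f: "f \<in> Hom" and z: "\<forall>g\<in>G. f g = 0" for f \<xi>
  proof -
    obtain a c where xi: "\<xi> = (\<Sum>g\<in>G. actM (a g) g + sM (c g) g)" using G(2) by blast
    have "f \<xi> = (\<Sum>g\<in>G. actN (a g) (f g) + sN (c g) (f g))"
      unfolding xi module_hom.sum[OF homf(1)[OF f]] module_hom.add[OF homf(1)[OF f]]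
        module_hom.scale[OF homf(1)[OF f]] homf(2)[OF f] ..
    also have "\<dots> = 0" using z lmod_act0(2)[OF assms(5)] by simp
    finally show ?thesis .
  qed
  have sub: "VS.subspace Hom"
    unfolding VS.subspace_def
  proof (intro conjI ballI allI)
    show "0 \<in> Hom" unfolding Hom_def Hom_A_def zero_fun_def Vector_Spaces.linear_iff using vsM vsN lmod_act0(2)[OF assms(5)]
      by simp
  next
    fix f g assume f: "f \<in> Hom" and g: "g \<in> Hom"
    have lf: "\<forall>x y. f (x + y) = f x + f y" "\<forall>c x. f (sM c x) = sN c (f x)"
      and lg: "\<forall>x y. g (x + y) = g x + g y" "\<forall>c x. g (sM c x) = sN c (g x)"
      using f g unfolding Hom_def Hom_A_def Vector_Spaces.linear_iff by blast+
    have af: "\<forall>a \<xi>. f (actM a \<xi>) = actN a (f \<xi>)" "\<forall>a \<xi>. g (actM a \<xi>) = actN a (g \<xi>)"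
      using f g unfolding Hom_def Hom_A_def by blast+
    show "f + g \<in> Hom" unfolding Hom_def Hom_A_def Vector_Spaces.linear_iff
      using vsM vsN lf lg af lmN by (simp add: VN.scale_right_distrib algebra_simps)
  next
    fix c f assume f: "f \<in> Hom"
    have lf: "\<forall>x y. f (x + y) = f x + f y" "\<forall>c x. f (sM c x) = sN c (f x)"
      using f unfolding Hom_def Hom_A_def Vector_Spaces.linear_iff by blast+
    have af: "\<forall>a \<xi>. f (actM a \<xi>) = actN a (f \<xi>)"
      using f unfolding Hom_def Hom_A_def by blast+
    show "fun_scale sN c f \<in> Hom" unfolding Hom_def Hom_A_def Vector_Spaces.linear_iff fun_scale_def
      using vsM vsN lf af lmN by (simp add: VN.scale_right_distrib VN.scale_left_commute)
  qed
  define \<Phi> where "\<Phi> f = (\<lambda>\<xi>. if \<xi> \<in> G then f \<xi> else 0)" for f :: "'m \<Rightarrow> 'n"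
  define \<delta> where "\<delta> g v = (\<lambda>\<xi>. if \<xi> = g then v else (0::'n))" for g :: 'm and v
  have hPhi: "module_hom (fun_scale sN) (fun_scale sN) \<Phi>"
    unfolding module_hom_iff module_iff_vector_space using vs_fun[OF vsN]
    by (auto simp: \<Phi>_def fun_scale_def fun_eq_iff)
  have hdelta: "module_hom sN (fun_scale sN) (\<delta> g)" for g
    unfolding module_hom_iff module_iff_vector_space using vs_fun[OF vsN] vsN
    by (auto simp: \<delta>_def fun_scale_def fun_eq_iff)
  define T where "T = (\<Union>g\<in>G. \<delta> g ` C')"
  have Tfin: "finite T" unfolding T_def using G(1) C'fin by blast
  have PhiT: "\<Phi> f \<in> VS.span T" if f: "f \<in> Hom" for f
  proof -
    have "\<Phi> f = (\<Sum>g\<in>G. \<delta> g (f g))"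
      by (auto simp: fun_eq_iff sum_fun_apply \<Phi>_def \<delta>_def G(1) if_distrib cong: if_cong)
    also have "\<dots> \<in> VS.span T"
    proof (rule VS.span_sum)
      fix g assume g: "g \<in> G"
      have "\<delta> g (f g) \<in> VS.span (\<delta> g ` C')"
        using module_hom.span_image[OF hdelta[of g]] K1[OF f g] by blast
      moreover have "\<delta> g ` C' \<subseteq> T" unfolding T_def using g by blast
      ultimately show "\<delta> g (f g) \<in> VS.span T" using VS.span_mono by blast
    qed
    finally show ?thesis .
  qed
  obtain B where B: "B \<subseteq> Hom" "VS.independent B" "Hom \<subseteq> VS.span B"
    by (rule VS.maximal_independent_subset)
  have spanB: "VS.span B \<subseteq> Hom" using VS.span_minimal[OF B(1) sub] .
  have inj: "inj_on \<Phi> (VS.span B)"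
  proof (rule inj_onI)
    fix f f' assume "f \<in> VS.span B" "f' \<in> VS.span B" and eq: "\<Phi> f = \<Phi> f'"
    then have ff: "f \<in> Hom" "f' \<in> Hom" using spanB by auto
    have d: "f - f' \<in> Hom" using VS.subspace_diff[OF sub ff] .
    have "\<forall>g\<in>G. (f - f') g = 0"
    proof
      fix g assume "g \<in> G"
      then show "(f - f') g = 0" using fun_cong[OF eq, of g] by (simp add: \<Phi>_def)
    qed
    then have "\<forall>\<xi>. (f - f') \<xi> = 0" using K2[OF d] by blast
    then show "f = f'" by (simp add: fun_eq_iff)
  qed
  have indep: "VS.independent (\<Phi> ` B)"
    using module_hom.independent_injective_image[OF hPhi B(2) inj] .
  have "\<Phi> ` B \<subseteq> VS.span T" using PhiT B(1) by blast
  then have "finite (\<Phi> ` B)" using VS.independent_span_bound[OF Tfin indep] by blast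
  then have "finite B" using finite_imageD inj VS.span_superset inj_on_subset by metis
  then show ?thesis unfolding fin_dim_def Hom_def[symmetric] using B(1) B(3) by blast
qed

end
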